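(* Let $G$ be a finite group and let $M,N$ be normal subgroups with $1<M\le N<G$ such that every $g\in G\setminus N$ is conjugate in $G$ to every element of $gM$. If $G/N$ is not a $p$-group for any prime $p$, then $M\cap Z(G)=\{1\}$. *)

theory Defs
  imports "HOL-Algebra.Algebra"
begin

definition group_center :: "('a, 'b) monoid_scheme \<Rightarrow> 'a set" where
  "group_center G = {z \<in> carrier G. \<forall>g \<in> carrier G. z \<otimes>\<^bsub>G\<^esub> g = g \<otimes>\<^bsub>G\<^esub> z}"

definition conjugate_in :: "('a, 'b) monoid_scheme \<Rightarrow> 'a \<Rightarrow> 'a \<Rightarrow> bool" where
  "conjugate_in G x y \<longleftrightarrow>
     (\<exists>h \<in> carrier G. y = h \<otimes>\<^bsub>G\<^esub> x \<otimes>\<^bsub>G\<^esub> inv\<^bsub>G\<^esub> h)"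

definition is_p_group :: "('a, 'b) monoid_scheme \<Rightarrow> nat \<Rightarrow> bool" where
  "is_p_group G p \<longleftrightarrow> Factorial_Ring.prime p \<and> finite (carrier G) \<and> (\<exists>k. order G = p ^ k)"

end

theory Submission
  imports Defs "HOL-Computational_Algebra.Primes"
begin

lemma (in group) conj_pow_aux:
  assumes "h \<in> carrier G" "g \<in> carrier G"
  shows "(h \<otimes> g \<otimes> inv h) [^] (n::nat) = h \<otimes> g [^] n \<otimes> inv h"
proof (induction n)
  case 0
  then show ?case using assms by simp
next
  case (Suc n)
  have "(h \<otimes> g \<otimes> inv h) [^] Suc n = (h \<otimes> g [^] n \<otimes> inv h) \<otimes> (h \<otimes> g \<otimes> inv h)"
    using Suc by simp
  also have "\<dots> = h \<otimes> g [^] Suc n \<otimes> inv h"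
  proof -
    have aux: "\<And>x. x \<in> carrier G \<Longrightarrow> inv h \<otimes> (h \<otimes> x) = x"
      using assms by (simp add: m_assoc[symmetric])
    show ?thesis using assms by (simp add: m_assoc aux)
  qed
  finally show ?case .
qed

lemma (in group) card_sub_dvd:
  assumes "subgroup I G" "subgroup J G" "I \<subseteq> J"
  shows "card I dvd card J"
proof -
  have "subgroup I (G\<lparr>carrier := J\<rparr>)" using subgroup_incl assms by blast
  moreover have "group (G\<lparr>carrier := J\<rparr>)" using assms(2) subgroup_imp_group by blast
  ultimately have "card (rcosets\<^bsub>G\<lparr>carrier := J\<rparr>\<^esub> I) * card I = order (G\<lparr>carrier := J\<rparr>)"
    using group.lagrange by blast
  then show ?thesis unfolding order_def by (metis dvd_triv_right partial_object.select_convs(1) partial_object.surjective partial_object.update_convs(1))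
qed

lemma (in group) main_aux:
  assumes "finite (carrier G)"
    and "M \<lhd> G" and "N \<lhd> G"
    and "{\<one>} \<subset> M" and "M \<subseteq> N" and "N \<subset> carrier G"
    and "\<And>g m. g \<in> carrier G - N \<Longrightarrow> m \<in> M \<Longrightarrow> conjugate_in G g (g \<otimes> m)"
    and "\<And>p::nat. Factorial_Ring.prime p \<Longrightarrow> \<not> is_p_group (G Mod N) p"
  shows "M \<inter> group_center G = {\<one>}"
proof (rule ccontr)
  have Msub: "subgroup M G" using assms(2) normal_imp_subgroup by blast
  have Nsub: "subgroup N G" using assms(3) normal_imp_subgroup by blast
  have one_in: "\<one> \<in> M \<inter> group_center G"
    using Msub subgroup.one_closed unfolding group_center_def by fastforce
  assume "M \<inter> group_center G \<noteq> {\<one>}"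
  then obtain z where z: "z \<in> M" "z \<in> group_center G" "z \<noteq> \<one>" using one_in by blast
  have zc: "z \<in> carrier G" using z Msub subgroup.subset by blast
  have key: "ord z dvd ord g" if g: "g \<in> carrier G - N" for g
  proof -
    obtain h where h: "h \<in> carrier G" "g \<otimes> z = h \<otimes> g \<otimes> inv h"
      using assms(7)[OF g z(1)] unfolding conjugate_in_def by blast
    have gc: "g \<in> carrier G" using g by blast
    have comm: "g \<otimes> z = z \<otimes> g" using z(2) gc unfolding group_center_def by auto
    have "(g \<otimes> z) [^] ord g = \<one>"
      using h conj_pow_aux[OF h(1) gc, of "ord g"] gc by (simp add: pow_ord_eq_1)
    moreover have "(g \<otimes> z) [^] ord g = z [^] ord g"
      using pow_mult_distrib[OF comm gc zc] gc zc by (simp add: pow_ord_eq_1)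
    ultimately show ?thesis using pow_eq_id[OF zc] by simp
  qed
  have "ord z \<noteq> 1"
  proof
    assume "ord z = 1"
    then have "z [^] (1::nat) = \<one>" using pow_ord_eq_1[OF zc] by simp
    then show False using z(3) zc by simp
  qed
  then obtain p where p: "Factorial_Ring.prime p" "p dvd ord z" using prime_factor_nat by blast
  have ordGN: "order (G Mod N) * card N = order G"
    by (simp add: FactGroup_def lagrange order_def Nsub)
  have posG: "order G > 0" using assms(1) order_gt_0_iff_finite by blast
  define n where "n = order (G Mod N)"
  have n0: "n \<noteq> 0" 
  proof
    assume "n = 0" then show False using ordGN posG n_def by simp
  qed
  obtain y where y: "n = p ^ multiplicity p n * y" "\<not> p dvd y"
    by (rule multiplicity_decompose'[where x=n and p=p]) (use n0 p(1) not_prime_unit in auto)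
  have "y \<noteq> 1"
  proof
    assume "y = 1"
    then have "is_p_group (G Mod N) p"
    proof -
      have "finite (carrier (G Mod N))"
        using n0 n_def unfolding order_def by (meson card.infinite)
      moreover have "order (G Mod N) = p ^ multiplicity p n" using y(1) n_def \<open>y = 1\<close> by simp
      ultimately show ?thesis unfolding is_p_group_def using p(1) by blast
    qed
    then show False using assms(8) p(1) by blast
  qed
  then obtain q where q: "Factorial_Ring.prime q" "q dvd y" using prime_factor_nat by blast
  have qp: "q \<noteq> p" using q y by blast
  have qn: "q dvd n" by (subst y(1)) (rule dvd_mult[OF q(2)])
  define a where "a = multiplicity q (order G)"
  obtain m where m: "order G = q ^ a * m" "\<not> q dvd m"
    unfolding a_def by (rule multiplicity_decompose'[where x="order G" and p=q]) (use posG q(1) not_prime_unit in auto)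
  obtain Q where Q: "subgroup Q G" "card Q = q ^ a"
    using sylow_thm[OF q(1) is_group m(1) assms(1)] by blast
  have "\<not> Q \<subseteq> N"
  proof
    assume "Q \<subseteq> N"
    then have "q ^ a dvd card N" using card_sub_dvd[OF Q(1) Nsub] Q(2) by simp
    then have "q * q ^ a dvd n * card N" using qn by (simp add: mult_dvd_mono)
    then have "q * q ^ a dvd q ^ a * m" using ordGN m(1) n_def by simp
    then have "q ^ a * q dvd q ^ a * m" by (simp add: mult.commute)
    moreover have "q ^ a \<noteq> 0" using q(1) by (simp add: prime_gt_0_nat)
    ultimately have "q dvd m" using q(1) by (auto simp: prime_gt_0_nat)
    then show False using m(2) by blast
  qed
  then obtain x where x: "x \<in> Q" "x \<notin> N" by blast
  have xc: "x \<in> carrier G" using x Q(1) subgroup.subset by blast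
  have "generate G {x} \<subseteq> Q" using generate_subgroup_incl[of "{x}" Q] Q(1) x(1) by blast
  then have "card (generate G {x}) dvd card Q"
    using card_sub_dvd[OF generate_is_subgroup[of "{x}"] Q(1)] xc by auto
  then have "ord x dvd q ^ a" using generate_pow_card[OF xc] Q(2) by simp
  then have "ord z dvd q ^ a" using key[of x] xc x(2) dvd_trans by blast
  then have "p dvd q ^ a" using p(2) dvd_trans by blast
  then have "p dvd q" using p(1) prime_dvd_power by blast
  then show False using p(1) q(1) qp using primes_dvd_imp_eq by blast
qed
 
theorem mainTheorem13:
  fixes G :: "('a, 'b) monoid_scheme" and M N :: "'a set"
  assumes "group G"
    and "finite (carrier G)"
    and "M \<lhd> G" and "N \<lhd> G"
    and "{\<one>\<^bsub>G\<^esub>} \<subset> M" and "M \<subseteq> N" and "N \<subset> carrier G"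
    and "\<And>g m. g \<in> carrier G - N \<Longrightarrow> m \<in> M \<Longrightarrow> conjugate_in G g (g \<otimes>\<^bsub>G\<^esub> m)"
    and "\<And>p::nat. Factorial_Ring.prime p \<Longrightarrow> \<not> is_p_group (G Mod N) p"
  shows "M \<inter> group_center G = {\<one>\<^bsub>G\<^esub>}"
  using group.main_aux[OF assms(1) assms(2-9)] by blast

end
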